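(* Consider a hyperbolic triangle with vertices $v_i,v_j,v_k$, carrying circles of radii $r_i,r_j,r_k>0$ centered at the vertices, with inversive distances $a=I_{jk}$, $b=I_{ki}$, $c=I_{ij}$, all $>1$, so that the edge lengths are $l_{jk}=\operatorname{arccosh}(\cosh r_j\cosh r_k+a\sinh r_j\sinh r_k)$, etc. Suppose these three lengths satisfy the strict triangle inequalities and the orthogonal circle of the face is compact, with hyperbolic radius $\rho_{ijk}>0$. Then $\Xi_{ijk}>0$ and $$\sinh r_i\sinh r_j\sinh r_k\sqrt{\Delta_{abc}}=\tanh\rho_{ijk}\sqrt{1+2xyz-x^2-y^2-z^2}=\sinh\rho_{ijk}\sqrt{\Xi_{ijk}}.$$
   Context: Notation: $p=\cosh r_i$, $q=\cosh r_j$, $r=\cosh r_k$, $x=\cosh l_{jk}$, $y=\cosh l_{ki}$, $z=\cosh l_{ij}$. The discriminant of inversive distance is $\Delta_{abc}=a^2+b^2+c^2+2abc-1$. The discriminant of compactness is $$\Xi_{ijk}=p^2(1-x^2)+q^2(1-y^2)+r^2(1-z^2)+2pq(xy-z)+2pr(xz-y)+2qr(yz-x).$$ Orthogonal circle: embed the triangle isometrically in the Poincaré disk $\mathbb D\subset\mathbb R^2$; the three hyperbolic vertex circles become disjoint Euclidean circles, and the orthogonal circle is the unique Euclidean circle orthogonal to all three. It is called compact if it lies in the open disk $\mathbb D$; then it is a hyperbolic circle with center $O_{ijk}$ and hyperbolic radius $\rho_{ijk}$, satisfying $\cosh d(O_{ijk},v_\alpha)=\cosh r_\alpha\cosh\rho_{ijk}$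 for $\alpha=i,j,k$. *)

theory Defs
  imports "HOL-Analysis.Analysis"
begin

text \<open>Poincare disk model: points are complex numbers z with cmod z < 1.
  Hyperbolic distance via cosh d(z,w) = 1 + 2|z-w|^2/((1-|z|^2)(1-|w|^2)).\<close>
definition pdist :: "complex \<Rightarrow> complex \<Rightarrow> real" where
  "pdist z w = arcosh (1 + 2 * (cmod (z - w))\<^sup>2 / ((1 - (cmod z)\<^sup>2) * (1 - (cmod w)\<^sup>2)))"

definition hcircle :: "complex \<Rightarrow> real \<Rightarrow> complex set" where
  "hcircle c r = {z. cmod z < 1 \<and> pdist c z = r}"

definition orth_circles :: "complex \<Rightarrow> real \<Rightarrow> complex \<Rightarrow> real \<Rightarrow> bool" where
  "orth_circles C1 R1 C2 R2 \<longleftrightarrow> (cmod (C1 - C2))\<^sup>2 = R1\<^sup>2 + R2\<^sup>2"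

definition Delta_disc :: "real \<Rightarrow> real \<Rightarrow> real \<Rightarrow> real" where
  "Delta_disc a b c = a\<^sup>2 + b\<^sup>2 + c\<^sup>2 + 2*a*b*c - 1"

definition Xi_disc :: "real \<Rightarrow> real \<Rightarrow> real \<Rightarrow> real \<Rightarrow> real \<Rightarrow> real \<Rightarrow> real" where
  "Xi_disc p q r x y z = p\<^sup>2 * (1 - x\<^sup>2) + q\<^sup>2 * (1 - y\<^sup>2) + r\<^sup>2 * (1 - z\<^sup>2)
     + 2*p*q*(x*y - z) + 2*p*r*(x*z - y) + 2*q*r*(y*z - x)"

end

theory Submission
  imports Defs
begin


lemma circ_pts:
  fixes t v1 v2 c1 c2 R :: real
  assumes R: "R>0" and H: "\<And>z1 z2. (z1-c1)^2+(z2-c2)^2 = R^2 \<Longrightarrow> t*(1-z1^2-z2^2) = (v1-z1)^2+(v2-z2)^2"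
  shows "(1+t)*c1 = v1" "(1+t)*c2 = v2" "(1+t)*(c1^2+c2^2+R^2) - 2*(c1* v1+c2* v2) + v1^2+v2^2 - t = 0"
proof -
  have a: "t*(1-(c1+R)^2-c2^2) = (v1-(c1+R))^2+(v2-c2)^2" by (rule H) simp
  have b: "t*(1-(c1-R)^2-c2^2) = (v1-(c1-R))^2+(v2-c2)^2" by (rule H) simp
  have c: "t*(1-c1^2-(c2+R)^2) = (v1-c1)^2+(v2-(c2+R))^2" by (rule H) simp
  have d: "t*(1-c1^2-(c2-R)^2) = (v1-c1)^2+(v2-(c2-R))^2" by (rule H) simp
  have "R*(v1 - (1+t)*c1) = 0" using a b by algebra
  then show "(1+t)*c1 = v1" using R by simp
  have "R*(v2 - (1+t)*c2) = 0" using c d by algebra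
  then show "(1+t)*c2 = v2" using R by simp
  show "(1+t)*(c1^2+c2^2+R^2) - 2*(c1* v1+c2* v2) + v1^2+v2^2 - t = 0" using a b by algebra
qed

lemma mul_of_div: "(P::real) \<noteq> 0 \<Longrightarrow> X = A / P \<Longrightarrow> X * P = A" by simp

definition E :: "complex \<Rightarrow> complex \<Rightarrow> real" where
  "E z w = 1 + 2 * (cmod (z - w))\<^sup>2 / ((1 - (cmod z)\<^sup>2) * (1 - (cmod w)\<^sup>2))"

lemma E_ge: assumes "cmod z < 1" "cmod w < 1" shows "E z w \<ge> 1"
proof -
  have "(cmod z)^2 < 1" "(cmod w)^2 < 1" using assms
    by (simp_all add: abs_square_less_1)
  then show ?thesis unfolding E_def by (simp add: mult_pos_pos)
qed

lemma cosh_pdist: assumes "cmod z < 1" "cmod w < 1" shows "cosh (pdist z w) = E z w"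
  using E_ge[OF assms] unfolding pdist_def E_def[symmetric] by simp

lemma cmod_sq: "(cmod z)^2 = (Re z)^2 + (Im z)^2"
  by (simp add: cmod_power2)

lemma hcirc:
  assumes v: "cmod v < 1" and R: "R > 0" and S: "sphere C R \<subseteq> hcircle v r"
  defines "t \<equiv> (cosh r - 1) * (1 - (cmod v)^2) / 2"
  shows "(1+t)* Re C = Re v" "(1+t)*Im C = Im v"
    "(1+t)*((Re C)^2+(Im C)^2+R^2) - 2*(Re C* Re v+Im C*Im v) + (Re v)^2+(Im v)^2 - t = 0"
proof -
  have H: "t*(1-z1^2-z2^2) = (Re v-z1)^2+(Im v-z2)^2" if h: "(z1-Re C)^2+(z2-Im C)^2 = R^2" for z1 z2
  proof -
    define z where "z = Complex z1 z2"
    have "(cmod (C - z))^2 = R^2" using h by (simp add: z_def cmod_sq power2_commute)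
    hence "dist C z = R" using R by (simp add: dist_norm)
    hence "z \<in> hcircle v r" using S by auto
    hence z1: "cmod z < 1" and pd: "pdist v z = r" by (auto simp: hcircle_def)
    have e: "E v z = cosh r" using cosh_pdist[OF v z1] pd by simp
    have "(cmod v)^2 < 1" "(cmod z)^2 < 1" using v z1 by (simp_all add: abs_square_less_1)
    then have pos: "(1 - (cmod v)^2) * (1 - (cmod z)^2) > 0" by simp
    have "cosh r - 1 = 2 * (cmod (v - z))\<^sup>2 / ((1 - (cmod v)\<^sup>2) * (1 - (cmod z)\<^sup>2))"
      using e unfolding E_def by simp
    then have "(cosh r - 1) * ((1 - (cmod v)^2) * (1 - (cmod z)^2)) = 2 * (cmod (v - z))\<^sup>2"
      using pos by (intro mul_of_div) auto
    then have "t * (1 - (cmod z)^2) = (cmod (v - z))^2"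
      unfolding t_def by (simp add: algebra_simps)
    then show ?thesis by (simp add: cmod_sq z_def diff_diff_eq)
  qed
  from circ_pts[OF R, of "Re C" "Im C" t "Re v" "Im v"] H
  show "(1+t)* Re C = Re v" "(1+t)*Im C = Im v"
    "(1+t)*((Re C)^2+(Im C)^2+R^2) - 2*(Re C* Re v+Im C*Im v) + (Re v)^2+(Im v)^2 - t = 0"
    by auto
qed

lemma rad_lem: fixes t a1 a2 v1 v2 Ra :: real assumes a1: "(1+t)*a1 = v1" and a2: "(1+t)*a2 = v2"
    and a3: "(1+t)*(a1^2+a2^2+Ra^2) - 2*(a1* v1+a2* v2) + v1^2+v2^2 - t = 0"
  shows "(1+t)^2* Ra^2 = t + t^2 - (v1^2+v2^2)*t"
proof -
  have "(1+t)^2* Ra^2 - (t + t^2 - (v1^2+v2^2)*t) = (1+t)*((1+t)*(a1^2+a2^2+Ra^2) - 2*(a1* v1+a2* v2) + v1^2+v2^2 - t)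
     - ((1+t)*a1 - v1)*((1+t)*a1 - v1) - ((1+t)*a2 - v2)*((1+t)*a2 - v2) + 0"
    by (simp add: algebra_simps power2_eq_square)
  then show ?thesis using a1 a2 a3 by simp
qed

lemma orth_real:
  fixes v1 v2 p1 p2 a1 a2 b1 b2 Ra Rb K L :: real
  assumes u: "v1^2+v2^2 < 1" and w: "p1^2+p2^2 < 1" and K: "K \<ge> 1" and L: "L \<ge> 1"
  defines "t \<equiv> (K-1)*(1-(v1^2+v2^2))/2" and "s \<equiv> (L-1)*(1-(p1^2+p2^2))/2"
  assumes a1: "(1+t)*a1 = v1" and a2: "(1+t)*a2 = v2"
    and a3: "(1+t)*(a1^2+a2^2+Ra^2) - 2*(a1* v1+a2* v2) + v1^2+v2^2 - t = 0"
    and b1: "(1+s)*b1 = p1" and b2: "(1+s)*b2 = p2"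
    and b3: "(1+s)*(b1^2+b2^2+Rb^2) - 2*(b1*p1+b2*p2) + p1^2+p2^2 - s = 0"
    and orth: "(b1-a1)^2+(b2-a2)^2 = Rb^2+Ra^2"
  shows "1 + 2*((p1-v1)^2+(p2-v2)^2)/((1-(p1^2+p2^2))*(1-(v1^2+v2^2))) = K*L"
proof -
  have t0: "t \<ge> 0" unfolding t_def using u K by simp
  have s0: "s \<ge> 0" unfolding s_def using w L by simp
  have h1: "(1+t)^2* Ra^2 = t + t^2 - (v1^2+v2^2)*t" by (rule rad_lem[OF a1 a2 a3])
  have h2: "(1+s)^2* Rb^2 = s + s^2 - (p1^2+p2^2)* s" by (rule rad_lem[OF b1 b2 b3])
  have d1: "(1+s)*(1+t)*(b1-a1) = (1+t)*p1 - (1+s)* v1" unfolding a1[symmetric] b1[symmetric] by (simp add: algebra_simps)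
  have d2: "(1+s)*(1+t)*(b2-a2) = (1+t)*p2 - (1+s)* v2" unfolding a2[symmetric] b2[symmetric] by (simp add: algebra_simps)
  have "((1+s)*(1+t))^2*((b1-a1)^2+(b2-a2)^2) = ((1+s)*(1+t)*(b1-a1))^2 + ((1+s)*(1+t)*(b2-a2))^2"
    by (simp add: algebra_simps power2_eq_square)
  also have "\<dots> = ((1+t)*p1 - (1+s)* v1)^2 + ((1+t)*p2 - (1+s)* v2)^2" using d1 d2 by simp
  finally have L1: "((1+s)*(1+t))^2*((b1-a1)^2+(b2-a2)^2) = ((1+t)*p1 - (1+s)* v1)^2 + ((1+t)*p2 - (1+s)* v2)^2" .
  have "((1+s)*(1+t))^2*((b1-a1)^2+(b2-a2)^2) = (1+t)^2*((1+s)^2* Rb^2) + (1+s)^2*((1+t)^2* Ra^2)"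
    using orth by (simp add: algebra_simps power2_eq_square)
  then have E1: "((1+t)*p1 - (1+s)* v1)^2 + ((1+t)*p2 - (1+s)* v2)^2
     = (1+t)^2*(s+s^2-(p1^2+p2^2)* s) + (1+s)^2*(t+t^2-(v1^2+v2^2)*t)"
    using L1 h1 h2 by simp
  have "(1+s)*(1+t)*((1+t)*((p1^2+p2^2)-s) + (1+s)*((v1^2+v2^2)-t) - 2*(p1* v1+p2* v2)) = 0"
    using E1 by algebra
  moreover have "(1+s)*(1+t) \<noteq> 0" using t0 s0 by simp
  ultimately have E2: "(1+t)*((p1^2+p2^2)-s) + (1+s)*((v1^2+v2^2)-t) = 2*(p1* v1+p2* v2)" by simp
  have G: "2*((p1-v1)^2+(p2-v2)^2) = (K*L - 1)*((1-(p1^2+p2^2))*(1-(v1^2+v2^2)))"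
  proof -
    have kt: "(K-1)*(1-(v1^2+v2^2)) = 2*t" unfolding t_def by simp
    have ks: "(L-1)*(1-(p1^2+p2^2)) = 2* s" unfolding s_def by simp
    have "(K * L - 1)*((1-(p1^2+p2^2))*(1-(v1^2+v2^2))) = ((K-1)*(1-(v1^2+v2^2)))*((L-1)*(1-(p1^2+p2^2)))
       + ((K-1)*(1-(v1^2+v2^2)))*(1-(p1^2+p2^2)) + ((L-1)*(1-(p1^2+p2^2)))*(1-(v1^2+v2^2))"
      by (simp add: algebra_simps)
    also have "\<dots> = 4*t* s + 2*t*(1-(p1^2+p2^2)) + 2* s*(1-(v1^2+v2^2))" unfolding kt ks by simp
    also have "\<dots> = 2*((p1-v1)^2+(p2-v2)^2)" using E2 by (simp add: algebra_simps power2_eq_square)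
    finally show ?thesis by simp
  qed
  have P: "(1-(p1^2+p2^2))*(1-(v1^2+v2^2)) > 0" using u w by simp
  show ?thesis using G P by (simp add: field_simps)
qed

definition X0 :: "complex \<Rightarrow> real" where "X0 z = (1 + (cmod z)^2)/(1 - (cmod z)^2)"
definition X1 :: "complex \<Rightarrow> real" where "X1 z = 2* Re z/(1 - (cmod z)^2)"
definition X2 :: "complex \<Rightarrow> real" where "X2 z = 2*Im z/(1 - (cmod z)^2)"

lemma hyp_real:
  fixes U W z1 z2 w1 w2 :: real
  assumes "U \<noteq> 0" "W \<noteq> 0" "U = 1 - (z1^2+z2^2)" "W = 1 - (w1^2+w2^2)"
  shows "(1 + (z1^2+z2^2))/U * ((1 + (w1^2+w2^2))/W) - 2*z1/U*(2*w1/W) - 2*z2/U*(2*w2/W)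
    = 1 + 2*((z1-w1)^2+(z2-w2)^2)/(U*W)"
proof -
  have "(1 + (z1^2+z2^2))*(1 + (w1^2+w2^2)) - 2*z1*(2*w1) - 2*z2*(2*w2) = U*W + 2*((z1-w1)^2+(z2-w2)^2)"
    unfolding assms(3,4) by (simp add: algebra_simps power2_eq_square)
  then show ?thesis using assms(1,2) by (simp add: field_simps)
qed

lemma hyp_form: assumes "cmod z < 1" "cmod w < 1"
  shows "X0 z * X0 w - X1 z * X1 w - X2 z * X2 w = E z w"
proof -
  have a: "(Re z)^2 + (Im z)^2 < 1" "(Re w)^2 + (Im w)^2 < 1"
    using assms by (simp_all add: abs_square_less_1 cmod_sq[symmetric])
  then have "1 - ((Re z)^2 + (Im z)^2) \<noteq> 0" "1 - ((Re w)^2 + (Im w)^2) \<noteq> 0" by auto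
  then show ?thesis unfolding X0_def X1_def X2_def E_def cmod_sq
    using hyp_real[of "1 - ((Re z)^2 + (Im z)^2)" "1 - ((Re w)^2 + (Im w)^2)" "Re z" "Im z" "Re w" "Im w"]
    by simp
qed

lemma E_sym: "E z w = E w z"
  unfolding E_def by (simp add: norm_minus_commute mult.commute)

lemma E_self: "E z z = 1" unfolding E_def by simp

lemma tri:
  fixes A B C :: real
  assumes "A \<ge> 0" "B \<ge> 0" "C \<ge> 0" "C < A+B" "A < B+C" "B < A+C"
  shows "1 + 2*cosh A*cosh B*cosh C - (cosh A)^2 - (cosh B)^2 - (cosh C)^2 > 0"
proof -
  have f1: "cosh C < cosh (A+B)" using assms by (simp add: cosh_real_nonneg_less_iff)
  have "cosh (A-B) = cosh \<bar>A-B\<bar>" by simp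
  also have "\<dots> < cosh C" using assms by (subst cosh_real_nonneg_less_iff) auto
  finally have f2: "cosh (A-B) < cosh C" .
  have "1 + 2*cosh A*cosh B*cosh C - (cosh A)^2 - (cosh B)^2 - (cosh C)^2
      = (cosh (A+B) - cosh C)*(cosh C - cosh (A-B))"
    unfolding cosh_add cosh_diff
    using cosh_square_eq[of A] cosh_square_eq[of B]
    by algebra
  also have "\<dots> > 0" using f1 f2 by simp
  finally show ?thesis .
qed

lemma deltaid:
  fixes p q r si sj sk a b c :: real
  assumes "p^2 = 1 + si^2" "q^2 = 1+sj^2" "r^2 = 1+sk^2"
  shows "let x = q*r + a* sj* sk; y = r*p + b* sk* si; z = p*q+c* si* sj in
   (1+2*x*y*z-x^2-y^2-z^2) - (p\<^sup>2 * (1 - x\<^sup>2) + q\<^sup>2 * (1 - y\<^sup>2) + r\<^sup>2 * (1 - z\<^sup>2)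
     + 2*p*q*(x*y - z) + 2*p*r*(x*z - y) + 2*q*r*(y*z - x)) = (si* sj* sk)^2 * (a\<^sup>2 + b\<^sup>2 + c\<^sup>2 + 2*a*b*c - 1)"
  using assms unfolding Let_def by algebra

definition Bf :: "real \<Rightarrow> real \<Rightarrow> real \<Rightarrow> real \<Rightarrow> real \<Rightarrow> real \<Rightarrow> real" where
 "Bf a0 a1 a2 b0 b1 b2 = a0*b0 - a1*b1 - a2*b2"

lemma det4: fixes a0 a1 a2 b0 b1 b2 c0 c1 c2 d0 d1 d2 :: real
  shows "let aa = Bf a0 a1 a2 a0 a1 a2; ab = Bf a0 a1 a2 b0 b1 b2; ac = Bf a0 a1 a2 c0 c1 c2; ad = Bf a0 a1 a2 d0 d1 d2;
   bb = Bf b0 b1 b2 b0 b1 b2; bc = Bf b0 b1 b2 c0 c1 c2; bd = Bf b0 b1 b2 d0 d1 d2; cc = Bf c0 c1 c2 c0 c1 c2;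
   cd = Bf c0 c1 c2 d0 d1 d2; dd = Bf d0 d1 d2 d0 d1 d2 in
   (aa*bb*cc + 2*ab*bc*ac - aa*bc^2 - bb*ac^2 - cc*ab^2)*dd
   - (ad^2*(bb*cc-bc^2) + bd^2*(aa*cc-ac^2) + cd^2*(aa*bb-ab^2)
      + 2*ad*bd*(ac*bc - ab*cc) + 2*ad*cd*(ab*bc - ac*bb) + 2*bd*cd*(ab*ac - aa*bc)) = 0"
  unfolding Let_def Bf_def by algebra

lemma det4':
  fixes a0 a1 a2 b0 b1 b2 c0 c1 c2 d0 d1 d2 x y z p q r L :: real
  assumes "Bf a0 a1 a2 a0 a1 a2 = 1" "Bf b0 b1 b2 b0 b1 b2 = 1" "Bf c0 c1 c2 c0 c1 c2 = 1" "Bf d0 d1 d2 d0 d1 d2 = 1"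
    "Bf a0 a1 a2 b0 b1 b2 = z" "Bf a0 a1 a2 c0 c1 c2 = y" "Bf b0 b1 b2 c0 c1 c2 = x"
    "Bf a0 a1 a2 d0 d1 d2 = p*L" "Bf b0 b1 b2 d0 d1 d2 = q*L" "Bf c0 c1 c2 d0 d1 d2 = r*L"
  shows "1 + 2*x*y*z - x^2 - y^2 - z^2 = L^2 * Xi_disc p q r x y z"
proof -
  have "(1*1*1 + 2*z*x*y - 1*x^2 - 1*y^2 - 1*z^2)*1
   - ((p*L)^2*(1*1-x^2) + (q*L)^2*(1*1-y^2) + (r*L)^2*(1*1-z^2)
      + 2*(p*L)*(q*L)*(y*x - z*1) + 2*(p*L)*(r*L)*(z*x - y*1) + 2*(q*L)*(r*L)*(z*y - 1*x)) = 0"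
    using det4[of a0 a1 a2 b0 b1 b2 c0 c1 c2 d0 d1 d2] unfolding Let_def assms .
  then show ?thesis unfolding Xi_disc_def by (simp add: algebra_simps power2_eq_square)
qed

lemma orth_complex:
  assumes v: "cmod v < 1" and Q: "cmod Q < 1" and Ri: "Ri > 0" and R: "R > 0"
    and Si: "sphere Ci Ri \<subseteq> hcircle v r" and S: "sphere C R \<subseteq> hcircle Q \<rho>"
    and orth: "orth_circles C R Ci Ri"
  shows "E Q v = cosh r * cosh \<rho>"
proof -
  note hi = hcirc[OF v Ri Si]
  note ho = hcirc[OF Q R S]
  have u: "(Re v)^2 + (Im v)^2 < 1" "(Re Q)^2 + (Im Q)^2 < 1"
    using v Q by (simp_all add: abs_square_less_1 cmod_sq[symmetric])
  have or2: "(Re C - Re Ci)^2 + (Im C - Im Ci)^2 = R^2 + Ri^2"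
    using orth unfolding orth_circles_def cmod_sq by simp
  have "1 + 2*((Re Q - Re v)^2+(Im Q - Im v)^2)/((1-((Re Q)^2+(Im Q)^2))*(1-((Re v)^2+(Im v)^2))) = cosh r * cosh \<rho>"
    by (rule orth_real[OF u(1) u(2) cosh_real_ge_1 cosh_real_ge_1 hi[unfolded cmod_sq] ho[unfolded cmod_sq] or2])
  then show ?thesis unfolding E_def cmod_sq by simp
qed

lemma arg_ge: fixes a s t :: real assumes "a > 1" "s > 0" "t > 0"
  shows "cosh s * cosh t + a * sinh s * sinh t \<ge> 1"
proof -
  have "1*1 \<le> cosh s * cosh t" by (rule mult_mono) (auto simp: cosh_real_ge_1)
  moreover have "a * sinh s * sinh t > 0" using assms by simp
  ultimately show ?thesis by linarith
qed


theorem mainTheorem2: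
  fixes ri rj rk a b c \<rho> Ri Rj Rk R :: real
    and vi vj vk Ci Cj Ck C Oc :: complex
  assumes "ri > 0" "rj > 0" "rk > 0" "a > 1" "b > 1" "c > 1"
  defines "ljk \<equiv> arcosh (cosh rj * cosh rk + a * sinh rj * sinh rk)"
    and "lki \<equiv> arcosh (cosh rk * cosh ri + b * sinh rk * sinh ri)"
    and "lij \<equiv> arcosh (cosh ri * cosh rj + c * sinh ri * sinh rj)"
  assumes "ljk < lki + lij" "lki < ljk + lij" "lij < ljk + lki"
    and "cmod vi < 1" "cmod vj < 1" "cmod vk < 1"
    and "pdist vj vk = ljk" "pdist vk vi = lki" "pdist vi vj = lij"
    and "Ri > 0" "hcircle vi ri = sphere Ci Ri"
    and "Rj > 0" "hcircle vj rj = sphere Cj Rj"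
    and "Rk > 0" "hcircle vk rk = sphere Ck Rk"
    and "R > 0" "orth_circles C R Ci Ri" "orth_circles C R Cj Rj" "orth_circles C R Ck Rk"
    and "sphere C R \<subseteq> ball 0 1"
    and "\<rho> > 0" "cmod Oc < 1" "sphere C R = hcircle Oc \<rho>"
  defines "p \<equiv> cosh ri" and "q \<equiv> cosh rj" and "r \<equiv> cosh rk"
    and "x \<equiv> cosh ljk" and "y \<equiv> cosh lki" and "z \<equiv> cosh lij"
  shows "Xi_disc p q r x y z > 0
    \<and> sinh ri * sinh rj * sinh rk * sqrt (Delta_disc a b c)
        = tanh \<rho> * sqrt (1 + 2*x*y*z - x\<^sup>2 - y\<^sup>2 - z\<^sup>2)
    \<and> tanh \<rho> * sqrt (1 + 2*x*y*z - x\<^sup>2 - y\<^sup>2 - z\<^sup>2)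
        = sinh \<rho> * sqrt (Xi_disc p q r x y z)"
proof -
  have shi: "sinh ri > 0" and shj: "sinh rj > 0" and shk: "sinh rk > 0" using assms by simp_all
  have gx: "q*r + a* sinh rj* sinh rk \<ge> 1" unfolding q_def r_def using arg_ge assms by simp
  have gy: "r*p + b* sinh rk* sinh ri \<ge> 1" unfolding r_def p_def using arg_ge assms by simp
  have gz: "p*q + c* sinh ri* sinh rj \<ge> 1" unfolding p_def q_def using arg_ge assms by simp
  have hx: "x = q*r + a* sinh rj* sinh rk" unfolding x_def ljk_def using gx unfolding q_def r_def by simp
  have hy: "y = r*p + b* sinh rk* sinh ri" unfolding y_def lki_def using gy unfolding r_def p_def by simp
  have hz: "z = p*q + c* sinh ri* sinh rj" unfolding z_def lij_def using gz unfolding p_def q_def by simp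
  have Ex: "E vj vk = x" using cosh_pdist[of vj vk] assms unfolding x_def by simp
  have Ey: "E vk vi = y" using cosh_pdist[of vk vi] assms unfolding y_def by simp
  have Ez: "E vi vj = z" using cosh_pdist[of vi vj] assms unfolding z_def by simp
  define L where "L = cosh \<rho>"
  have Oi: "E Oc vi = p * L" unfolding p_def L_def
  proof (rule orth_complex[OF \<open>cmod vi < 1\<close> \<open>cmod Oc < 1\<close> \<open>Ri > 0\<close> \<open>R > 0\<close> _ _ \<open>orth_circles C R Ci Ri\<close>])
    show "sphere Ci Ri \<subseteq> hcircle vi ri" using \<open>hcircle vi ri = sphere Ci Ri\<close> by simp
    show "sphere C R \<subseteq> hcircle Oc \<rho>" using \<open>sphere C R = hcircle Oc \<rho>\<close> by simp
  qed
  have Oj: "E Oc vj = q * L" unfolding q_def L_def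
  proof (rule orth_complex[OF \<open>cmod vj < 1\<close> \<open>cmod Oc < 1\<close> \<open>Rj > 0\<close> \<open>R > 0\<close> _ _ \<open>orth_circles C R Cj Rj\<close>])
    show "sphere Cj Rj \<subseteq> hcircle vj rj" using \<open>hcircle vj rj = sphere Cj Rj\<close> by simp
    show "sphere C R \<subseteq> hcircle Oc \<rho>" using \<open>sphere C R = hcircle Oc \<rho>\<close> by simp
  qed
  have Ok: "E Oc vk = r * L" unfolding r_def L_def
  proof (rule orth_complex[OF \<open>cmod vk < 1\<close> \<open>cmod Oc < 1\<close> \<open>Rk > 0\<close> \<open>R > 0\<close> _ _ \<open>orth_circles C R Ck Rk\<close>])
    show "sphere Ck Rk \<subseteq> hcircle vk rk" using \<open>hcircle vk rk = sphere Ck Rk\<close> by simp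
    show "sphere C R \<subseteq> hcircle Oc \<rho>" using \<open>sphere C R = hcircle Oc \<rho>\<close> by simp
  qed
  have BB: "Bf (X0 u) (X1 u) (X2 u) (X0 w) (X1 w) (X2 w) = E u w" if "cmod u < 1" "cmod w < 1" for u w
    unfolding Bf_def using hyp_form[OF that] by simp
  have DX: "1 + 2*x*y*z - x^2 - y^2 - z^2 = L^2 * Xi_disc p q r x y z"
    apply (rule det4'[of "X0 vi" "X1 vi" "X2 vi" "X0 vj" "X1 vj" "X2 vj" "X0 vk" "X1 vk" "X2 vk" "X0 Oc" "X1 Oc" "X2 Oc"])
    using assms by (simp_all add: BB E_self Ex Ey Ez Oi Oj Ok E_sym[of vi Oc] E_sym[of vj Oc] E_sym[of vk Oc] E_sym[of vi vk])
  have l0: "ljk \<ge> 0" "lki \<ge> 0" "lij \<ge> 0" unfolding ljk_def lki_def lij_def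
    using gx gy gz unfolding p_def q_def r_def by (simp_all add: mult.commute)
  have Dpos: "1 + 2*x*y*z - x^2 - y^2 - z^2 > 0"
    using tri[OF l0 \<open>lij < ljk + lki\<close> \<open>ljk < lki + lij\<close> \<open>lki < ljk + lij\<close>]
    unfolding x_def y_def z_def by (simp add: algebra_simps)
  have Lpos: "L > 0" unfolding L_def by simp
  have XiD: "Xi_disc p q r x y z = (1 + 2*x*y*z - x^2 - y^2 - z^2) / L^2"
    using DX Lpos by (simp add: field_simps)
  have Xipos: "Xi_disc p q r x y z > 0" unfolding XiD using Dpos Lpos by simp
  define D where "D = 1 + 2*x*y*z - x^2 - y^2 - z^2"
  define S where "S = sinh ri * sinh rj * sinh rk"
  have Spos: "S > 0" unfolding S_def using shi shj shk by simp
  have Did: "D - Xi_disc p q r x y z = S^2 * Delta_disc a b c"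
    using deltaid[of p "sinh ri" q "sinh rj" r "sinh rk" a b c]
    unfolding Let_def hx[symmetric] hy[symmetric] hz[symmetric] D_def S_def Xi_disc_def Delta_disc_def
    unfolding p_def q_def r_def by (simp add: cosh_square_eq)
  have sr: "sinh \<rho> > 0" using assms by simp
  have L2: "L^2 = 1 + (sinh \<rho>)^2" unfolding L_def by (simp add: cosh_square_eq)
  have th: "tanh \<rho> = sinh \<rho> / L" unfolding L_def tanh_def by simp
  have "S^2 * Delta_disc a b c = D * (sinh \<rho> / L)^2"
  proof -
    have "D * (sinh \<rho> / L)^2 = D * (L^2 - 1) / L^2" using L2 by (simp add: power_divide)
    also have "\<dots> = D - D / L^2" using Lpos by (simp add: field_simps)
    finally show ?thesis unfolding Did[symmetric] XiD D_def[symmetric] by simp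
  qed
  then have c1: "S * sqrt (Delta_disc a b c) = tanh \<rho> * sqrt D"
    using Spos sr Lpos unfolding th
    by (metis (no_types, lifting) abs_of_pos divide_pos_pos mult.commute real_sqrt_abs real_sqrt_mult)
  have c2: "tanh \<rho> * sqrt D = sinh \<rho> * sqrt (Xi_disc p q r x y z)"
    unfolding th XiD D_def[symmetric] using Lpos by (simp add: real_sqrt_divide)
  show ?thesis using Xipos c1 c2 unfolding S_def D_def by (simp add: mult.assoc)
qed

end
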